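(* Let $P$ be a finite bounded poset with minimum $\hat{0}$ and maximum $\hat{1}$, and let $h$ be a height function on $P$. Then $$\mathsf{Z}_{P,h}([-1]_q)=q^{-h(\hat{0})-h(\hat{1})}\,\mu_P(\hat{0},\hat{1}),$$ where $\mu_P$ is the Möbius function of $P$.
   Context: $q$ is an indeterminate; $[n]_q=(q^n-1)/(q-1)$ for $n\in\mathbb{Z}$ (so $[-1]_q=-q^{-1}$). A height function is $h:P\to\mathbb{N}$ with $h(x)<h(y)$ whenever $y$ covers $x$. For a tuple $a$ of $k$ distinct nonnegative integers, $\mathsf{E}_a\in\mathbb{Q}(q)[x]$ is the unique polynomial with $\mathsf{E}_a([n]_q)=\sum_{m\in\mathbb{N}^k,\sum m_i=n}q^{\sum a_im_i}$ for $n\ge0$. The $q$-Zeta polynomial is $\mathsf{Z}_{P,h}(x)=\sum_{k\ge1}\sum_{c_1<\cdots<c_k\text{ in }P}q^{\sum_i h(c_i)}\mathsf{E}_{(h(c_1),\dots,h(c_k))}((x-[k+1]_q)/q^{k+1})$; it is the unique polynomial with $\mathsf{Z}_{P,h}([n]_q)=\sum_{e_1\le\cdots\le e_{n-1}}q^{\sum_j h(e_j)}$ for all $n\ge2$. *)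

theory Defs
  imports "HOL-Computational_Algebra.Polynomial" "HOL-Computational_Algebra.Fraction_Field"
begin

type_synonym qfun = "rat poly fract"

definition qvar :: qfun where
  "qvar = Fract [:0, 1:] 1"

definition qint :: "int \<Rightarrow> qfun" where
  "qint n = (qvar powi n - 1) / (qvar - 1)"

definition qE :: "nat list \<Rightarrow> qfun poly" where
  "qE a = (THE p. \<forall>n::nat. poly p (qint (int n)) =
      (\<Sum>m\<in>{m :: nat list. length m = length a \<and> sum_list m = n}.
          qvar ^ (\<Sum>i<length a. a ! i * m ! i)))"

definition covers_in :: "'a::order set \<Rightarrow> 'a \<Rightarrow> 'a \<Rightarrow> bool" where
  "covers_in P x y \<longleftrightarrow> x \<in> P \<and> y \<in> P \<and> x < y \<and> \<not> (\<exists>z\<in>P. x < z \<and> z < y)"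

definition height_function :: "'a::order set \<Rightarrow> ('a \<Rightarrow> nat) \<Rightarrow> bool" where
  "height_function P h \<longleftrightarrow> (\<forall>x y. covers_in P x y \<longrightarrow> h x < h y)"

definition chains_in :: "'a::order set \<Rightarrow> 'a list set" where
  "chains_in P = {cs. cs \<noteq> [] \<and> set cs \<subseteq> P \<and> sorted_wrt (<) cs}"

definition qZeta :: "'a::order set \<Rightarrow> ('a \<Rightarrow> nat) \<Rightarrow> qfun poly" where
  "qZeta P h = (\<Sum>cs\<in>chains_in P.
      let k = length cs in
      smult (qvar ^ sum_list (map h cs))
        (pcompose (qE (map h cs))
           [: - qint (int k + 1) / qvar ^ (k + 1), 1 / qvar ^ (k + 1) :]))"

text \<open>Moebius function of the poset P (recursion with fuel card P, which suffices
  since every strict chain in P has at most card P elements).\<close>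
fun mob_aux :: "nat \<Rightarrow> 'a::order set \<Rightarrow> 'a \<Rightarrow> 'a \<Rightarrow> int" where
  "mob_aux 0 P x y = (if x = y then 1 else 0)"
| "mob_aux (Suc n) P x y =
     (if x = y then 1
      else if x < y then - (\<Sum>z\<in>{z\<in>P. x \<le> z \<and> z < y}. mob_aux n P x z)
      else 0)"

definition moebius :: "'a::order set \<Rightarrow> 'a \<Rightarrow> 'a \<Rightarrow> int" where
  "moebius P x y = mob_aux (card P) P x y"

end

theory Submission
  imports Defs
begin


abbreviation q :: qfun where "q \<equiv> qvar"

lemma qpow_Fract: "q ^ n = Fract ([:0,1:] ^ n) 1"
  by (induction n) (auto simp: qvar_def One_fract_def)

lemma qpow_inj: "q ^ m = q ^ n \<Longrightarrow> m = n"
proof -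
  assume "q ^ m = q ^ n"
  hence "[:0,1::rat:] ^ m = [:0,1:] ^ n" by (simp add: qpow_Fract eq_fract)
  hence "degree ([:0,1::rat:] ^ m) = degree ([:0,1::rat:] ^ n)" by simp
  thus ?thesis by (simp add: degree_power_eq)
qed

lemma q_nz [simp]: "q \<noteq> 0"
  using qpow_inj[of 1 2] by auto

lemma q_ne1 [simp]: "q \<noteq> 1"
  using qpow_inj[of 1 0] by auto

lemma q_m1_nz [simp]: "q - 1 \<noteq> 0" by simp

lemma finite_list_len: "finite {m :: nat list. length m = k \<and> sum_list m = n}"
proof -
  have "{m :: nat list. length m = k \<and> sum_list m = n} \<subseteq> {m. set m \<subseteq> {0..n} \<and> length m = k}"
    by (auto simp: member_le_sum_list)
  moreover have "finite {m. set m \<subseteq> {0..n} \<and> length m = k}"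
    by (rule finite_lists_length_eq) simp
  ultimately show ?thesis by (rule finite_subset)
qed



definition SL :: "nat \<Rightarrow> nat \<Rightarrow> nat list set" where
  "SL k n = {m :: nat list. length m = k \<and> sum_list m = n}"

definition H :: "nat list \<Rightarrow> nat \<Rightarrow> qfun" where
  "H a n = (\<Sum>m\<in>SL (length a) n. q ^ (\<Sum>i<length a. a ! i * m ! i))"

lemma H_Nil: "H [] n = (if n = 0 then 1 else 0)"
proof -
  have "SL 0 n = (if n = 0 then {[]} else {})" by (auto simp: SL_def)
  thus ?thesis by (simp add: H_def)
qed

lemma SL_Suc: "SL (Suc k) n = (\<Union>j\<in>{..n}. (\<lambda>m. j # m) ` SL k (n - j))"
proof (rule set_eqI)
  fix m show "m \<in> SL (Suc k) n \<longleftrightarrow> m \<in> (\<Union>j\<in>{..n}. (\<lambda>m. j # m) ` SL k (n - j))"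
    apply (cases m)
     apply (auto simp: SL_def)
    subgoal for x xs by (rule bexI[where x=x]) auto
    done
qed

lemma H_Cons: "H (b # a) n = (\<Sum>j\<le>n. q ^ (b * j) * H a (n - j))"
proof -
  have fin: "finite (SL k n)" for k n using finite_list_len by (simp add: SL_def)
  have "H (b # a) n = (\<Sum>m\<in>(\<Union>j\<in>{..n}. (\<lambda>m. j # m) ` SL (length a) (n - j)).
            q ^ (\<Sum>i<Suc (length a). (b # a) ! i * m ! i))"
    by (simp add: H_def SL_Suc)
  also have "\<dots> = (\<Sum>j\<le>n. \<Sum>m\<in>(\<lambda>m. j # m) ` SL (length a) (n - j).
            q ^ (\<Sum>i<Suc (length a). (b # a) ! i * m ! i))"
    by (rule sum.UNION_disjoint) (auto simp: fin)
  also have "\<dots> = (\<Sum>j\<le>n. \<Sum>m\<in>SL (length a) (n - j).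
            q ^ (\<Sum>i<Suc (length a). (b # a) ! i * (j # m) ! i))"
    by (subst sum.reindex) (auto simp: inj_on_def)
  also have "\<dots> = (\<Sum>j\<le>n. \<Sum>m\<in>SL (length a) (n - j).
            q ^ (b * j) * q ^ (\<Sum>i<length a. a ! i * m ! i))"
    by (simp del: sum.lessThan_Suc add: sum.lessThan_Suc_shift power_add)
  also have "\<dots> = (\<Sum>j\<le>n. q ^ (b * j) * H a (n - j))"
    by (simp add: H_def sum_distrib_left)
  finally show ?thesis .
qed

lemma H_zero: "H a 0 = 1"
  by (induction a) (simp_all add: H_Nil H_Cons)

lemma H_single: "H [b] n = q ^ (b * n)"
proof -
  have "H [b] n = (\<Sum>j\<le>n. if j = n then q ^ (b * j) else 0)"
    unfolding H_Cons H_Nil by (rule sum.cong) auto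
  thus ?thesis by simp
qed

lemma H_Cons_Suc: "H (b # a) (Suc n) = q ^ b * H (b # a) n + H a (Suc n)"
proof -
  have "H (b # a) (Suc n) = (\<Sum>j\<le>Suc n. q ^ (b * j) * H a (Suc n - j))" by (rule H_Cons)
  also have "\<dots> = H a (Suc n) + (\<Sum>j\<le>n. q ^ (b * Suc j) * H a (n - j))"
    by (subst sum.atMost_Suc_shift) simp
  also have "\<dots> = H a (Suc n) + q ^ b * H (b # a) n"
    by (simp add: H_Cons sum_distrib_left power_add mult.assoc)
  finally show ?thesis by simp
qed



lemma infinite_inj_range: "inj (f :: nat \<Rightarrow> 'b) \<Longrightarrow> infinite (range f)"
  using finite_imageD by fastforce

lemma poly_zero_qpow:
  assumes "\<forall>n. poly p (q ^ Suc n) = 0" shows "p = 0"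
proof (rule ccontr)
  assume "p \<noteq> 0"
  hence "finite {x. poly p x = 0}" by (rule poly_roots_finite)
  moreover have "range (\<lambda>n. q ^ Suc n) \<subseteq> {x. poly p x = 0}" using assms by auto
  moreover have "inj (\<lambda>n. q ^ Suc n)" by (auto simp: inj_def dest: qpow_inj)
  ultimately show False using infinite_inj_range finite_subset by blast
qed

lemma poly_eq_qpow:
  assumes "\<forall>n. poly p (q ^ n) = poly r (q ^ n)" shows "p = r"
proof -
  have "p - r = 0" by (rule poly_zero_qpow) (use assms in \<open>simp del: power_Suc\<close>)
  thus ?thesis by simp
qed

lemma R_exists:
  "sorted_wrt (<) a \<Longrightarrow> a \<noteq> [] \<Longrightarrow>
     \<exists>r. (\<forall>n. poly r (q ^ n) = H a n) \<and> (\<forall>d. coeff r d \<noteq> 0 \<longrightarrow> d \<in> set a)"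
proof (induction a)
  case Nil then show ?case by simp
next
  case (Cons b a')
  show ?case
  proof (cases "a' = []")
    case True
    have "poly (monom 1 b) (q ^ n) = H [b] n" for n
      by (simp add: poly_monom H_single power_mult[symmetric] mult.commute)
    moreover have "coeff (monom 1 b) d \<noteq> 0 \<longrightarrow> d \<in> set [b]" for d
      by (simp add: coeff_monom)
    ultimately show ?thesis using True by blast
  next
    case False
    have sa: "sorted_wrt (<) a'" using Cons.prems by simp
    have bnot: "b \<notin> set a'" using Cons.prems by auto
    obtain r' where r'1: "\<forall>n. poly r' (q ^ n) = H a' n"
      and r'2: "\<forall>d. coeff r' d \<noteq> 0 \<longrightarrow> d \<in> set a'"
      using Cons.IH[OF sa False] by blast
    define c where "c d = coeff r' d / (1 - q ^ b / q ^ d)" for d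
    define s where "s = (\<Sum>d\<le>degree r'. monom (c d) d)"
    have s_eval: "poly s z = (\<Sum>d\<le>degree r'. c d * z ^ d)" for z
      by (simp add: s_def poly_sum poly_monom)
    have T: "poly s z - q ^ b * poly s (z / q) = poly r' z" for z
    proof -
      have "poly s z - q ^ b * poly s (z / q)
          = (\<Sum>d\<le>degree r'. c d * z ^ d - q ^ b * (c d * (z / q) ^ d))"
        by (simp add: s_eval sum_distrib_left sum_subtractf)
      also have "\<dots> = (\<Sum>d\<le>degree r'. coeff r' d * z ^ d)"
      proof (rule sum.cong)
        fix d assume "d \<in> {..degree r'}"
        show "c d * z ^ d - q ^ b * (c d * (z / q) ^ d) = coeff r' d * z ^ d"
        proof (cases "coeff r' d = 0")
          case True thus ?thesis by (simp add: c_def)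
        next
          case False
          hence "d \<noteq> b" using r'2 bnot by auto
          hence "q ^ b \<noteq> q ^ d" using qpow_inj by metis
          hence ne: "1 - q ^ b / q ^ d \<noteq> 0" by (simp add: field_simps)
          have "c d * z ^ d - q ^ b * (c d * (z / q) ^ d) = c d * (1 - q ^ b / q ^ d) * z ^ d"
            by (simp add: power_divide field_simps)
          also have "\<dots> = coeff r' d * z ^ d" using ne by (simp add: c_def)
          finally show ?thesis .
        qed
      qed simp
      also have "\<dots> = poly r' z" by (simp add: poly_altdef)
      finally show ?thesis .
    qed
    define t where "t = 1 - poly s 1"
    define r where "r = s + smult t (monom 1 b)"
    have Tr: "poly r z = q ^ b * poly r (z / q) + poly r' z" for z
    proof -
      have "q ^ b * (z / q) ^ b = z ^ b" by (simp add: power_divide)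
      thus ?thesis using T[of z] unfolding r_def
        by (simp add: poly_monom algebra_simps)
    qed
    have r1: "poly r 1 = 1" by (simp add: r_def t_def poly_monom)
    have "poly r (q ^ n) = H (b # a') n" for n
    proof (induction n)
      case 0 thus ?case using r1 by (simp add: H_zero)
    next
      case (Suc n)
      have "poly r (q ^ Suc n) = q ^ b * poly r (q ^ n) + poly r' (q ^ Suc n)"
        using Tr[of "q ^ Suc n"] by simp
      thus ?case using Suc r'1[rule_format, of "Suc n"] H_Cons_Suc[of b a' n] by simp
    qed
    moreover have "coeff r d \<noteq> 0 \<longrightarrow> d \<in> set (b # a')" for d
    proof
      assume nz: "coeff r d \<noteq> 0"
      show "d \<in> set (b # a')"
      proof (rule ccontr)
        assume "d \<notin> set (b # a')"
        hence "d \<noteq> b" "coeff r' d = 0" using r'2 by auto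
        hence "coeff s d = 0"
          by (auto simp: s_def coeff_sum coeff_monom c_def intro!: sum.neutral)
        thus False using nz \<open>d \<noteq> b\<close> by (simp add: r_def coeff_monom)
      qed
    qed
    ultimately show ?thesis by blast
  qed
qed

definition R :: "nat list \<Rightarrow> qfun poly" where
  "R a = (THE r. \<forall>n. poly r (q ^ n) = H a n)"

lemma R_spec: "sorted_wrt (<) a \<Longrightarrow> a \<noteq> [] \<Longrightarrow> poly (R a) (q ^ n) = H a n"
proof -
  assume a: "sorted_wrt (<) a" "a \<noteq> []"
  then obtain r where r: "\<forall>n. poly r (q ^ n) = H a n" using R_exists by blast
  have "R a = r" unfolding R_def
    by (rule the_equality) (use r poly_eq_qpow in auto)
  thus ?thesis using r by simp
qed

lemma R_single: "R [b] = monom 1 b"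
  by (rule poly_eq_qpow) (simp add: R_spec poly_monom H_single power_mult[symmetric] mult.commute)

lemma R_step:
  assumes "sorted_wrt (<) (b # a)" "a \<noteq> []"
  shows "poly (R (b # a)) z = q ^ b * poly (R (b # a)) (z / q) + poly (R a) z"
proof -
  define D where "D = R (b # a) - smult (q ^ b) (pcompose (R (b # a)) [:0, 1 / q:]) - R a"
  have pc: "poly (pcompose p [:0, 1 / q:]) x = poly p (x / q)" for p x
    by (simp add: poly_pcompose divide_inverse)
  have sa: "sorted_wrt (<) a" using assms by simp
  have "D = 0"
  proof (rule poly_zero_qpow, rule allI)
    fix n
    show "poly D (q ^ Suc n) = 0"
      using assms sa R_spec[OF sa assms(2), of "Suc n"] R_spec[OF assms(1), of "Suc n"]
        H_Cons_Suc[of b a n]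
      by (simp add: D_def pc R_spec)
  qed
  hence "poly D z = 0" by simp
  thus ?thesis by (simp add: D_def pc)
qed

lemma qint_nat: "qint (int n) = (q ^ n - 1) / (q - 1)"
  by (simp add: qint_def)

lemma qE_R:
  assumes "sorted_wrt (<) a" "a \<noteq> []"
  shows "qE a = pcompose (R a) [:1, q - 1:]"
proof -
  have key: "1 + (q - 1) * qint (int n) = q ^ n" for n
    by (simp add: qint_nat)
  have P0: "poly (pcompose (R a) [:1, q - 1:]) (qint (int n)) = H a n" for n
    using key[of n] assms by (simp add: poly_pcompose R_spec algebra_simps)
  have inj: "inj (\<lambda>n. qint (int n))"
    by (auto simp: inj_def qint_nat dest: qpow_inj)
  show ?thesis unfolding qE_def
  proof (rule the_equality)
    show "\<forall>n. poly (pcompose (R a) [:1, q - 1:]) (qint (int n)) =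
      (\<Sum>m\<in>{m. length m = length a \<and> sum_list m = n}. q ^ (\<Sum>i<length a. a ! i * m ! i))"
      using P0 by (simp add: H_def SL_def)
  next
    fix p assume "\<forall>n. poly p (qint (int n)) =
      (\<Sum>m\<in>{m. length m = length a \<and> sum_list m = n}. q ^ (\<Sum>i<length a. a ! i * m ! i))"
    hence pe: "poly p (qint (int n)) = H a n" for n by (simp add: H_def SL_def)
    show "p = pcompose (R a) [:1, q - 1:]"
    proof (rule ccontr)
      assume "p \<noteq> pcompose (R a) [:1, q - 1:]"
      hence "p - pcompose (R a) [:1, q - 1:] \<noteq> 0" by simp
      hence "finite {x. poly (p - pcompose (R a) [:1, q - 1:]) x = 0}" by (rule poly_roots_finite)
      moreover have "range (\<lambda>n. qint (int n)) \<subseteq> {x. poly (p - pcompose (R a) [:1, q - 1:]) x = 0}"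
        using pe P0 by auto
      ultimately show False using infinite_inj_range[OF inj] finite_subset by blast
    qed
  qed
qed



definition yl :: "nat list \<Rightarrow> qfun list" where
  "yl a = map (\<lambda>d. 1 / q ^ d) a"

fun h2 :: "qfun list \<Rightarrow> qfun" where
  "h2 [] = 0"
| "h2 (x # xs) = x * (x + sum_list xs) + h2 xs"

lemma R_one: "sorted_wrt (<) a \<Longrightarrow> a \<noteq> [] \<Longrightarrow> poly (R a) 1 = 1"
  using R_spec[of a 0] by (simp add: H_zero)

lemma R_vals:
  "sorted_wrt (<) a \<Longrightarrow> a \<noteq> [] \<Longrightarrow>
   (\<forall>j. 1 \<le> j \<and> j < length a \<longrightarrow> poly (R a) (1 / q ^ j) = 0) \<and>
   poly (R a) (1 / q ^ length a) = (-1) ^ (length a - 1) * prod_list (yl a) \<and>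
   poly (R a) (1 / q ^ (length a + 1)) = (-1) ^ (length a - 1) * prod_list (yl a) * sum_list (yl a) \<and>
   poly (R a) (1 / q ^ (length a + 2)) = (-1) ^ (length a - 1) * prod_list (yl a) * h2 (yl a)"
proof (induction a)
  case Nil thus ?case by simp
next
  case (Cons b a')
  show ?case
  proof (cases "a' = []")
    case True
    have e: "(1 / q ^ k) ^ b = (1 / q ^ b) ^ k" for k
      by (simp add: power_divide power_mult[symmetric] mult.commute)
    show ?thesis using True
      by (simp add: R_single poly_monom yl_def e power2_eq_square power3_eq_cube power_divide power_mult_distrib)
  next
    case False
    have sa: "sorted_wrt (<) a'" using Cons.prems by simp
    note IH = Cons.IH[OF sa False]
    define k where "k = length a'"
    obtain m where km: "k = Suc m" using False k_def by (cases a') auto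
    define F where "F j = poly (R (b # a')) (1 / q ^ j)" for j
    define G where "G j = poly (R a') (1 / q ^ j)" for j
    define yb where "yb = 1 / q ^ b"
    define P where "P = prod_list (yl a')"
    define S where "S = sum_list (yl a')"
    define T where "T = h2 (yl a')"
    have rec: "F (Suc j) = yb * (F j - G j)" for j
    proof -
      have "F j = q ^ b * F (Suc j) + G j"
        using R_step[OF Cons.prems(1) False, of "1 / q ^ j"] by (simp add: F_def G_def mult.commute)
      thus ?thesis by (simp add: yb_def field_simps)
    qed
    have F0: "F 0 = 1" using R_one[OF Cons.prems] by (simp add: F_def)
    have G0: "G 0 = 1" using R_one[OF sa False] by (simp add: G_def)
    have Gz: "1 \<le> j \<Longrightarrow> j < k \<Longrightarrow> G j = 0" for j using IH by (simp add: G_def k_def)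
    have Gk: "G k = (-1) ^ m * P" using IH km by (simp add: G_def k_def P_def)
    have Gk1: "G (k + 1) = (-1) ^ m * P * S" using IH km by (simp add: G_def k_def P_def S_def)
    have Gk2: "G (k + 2) = (-1) ^ m * P * T" using IH km by (simp add: G_def k_def P_def T_def)
    have Fz: "1 \<le> j \<and> j < Suc k \<longrightarrow> F j = 0" for j
    proof (induction j)
      case 0 thus ?case by simp
    next
      case (Suc j)
      show ?case
      proof (cases "j = 0")
        case True thus ?thesis using F0 G0 rec[of 0] by simp
      next
        case False thus ?thesis using Suc rec[of j] Gz[of j] by simp
      qed
    qed
    have Fk: "F (Suc k) = - ((-1) ^ m * yb * P)"
      using rec[of k] Fz[of k] Gk km by simp
    have Fk1: "F (Suc k + 1) = - ((-1) ^ m * yb * P * (yb + S))"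
      using rec[of "Suc k"] Fk Gk1 by (simp add: algebra_simps)
    have Fk2: "F (Suc k + 2) = - ((-1) ^ m * yb * P * (yb * (yb + S) + T))"
    proof -
      have "F (Suc k + 2) = yb * (F (Suc k + 1) - G (k + 2))"
        using rec[of "Suc k + 1"] by (simp add: eval_nat_numeral)
      also have "\<dots> = yb * (- ((-1) ^ m * yb * P * (yb + S)) - (-1) ^ m * P * T)"
        by (simp only: Fk1 Gk2)
      also have "\<dots> = - ((-1) ^ m * yb * P * (yb * (yb + S) + T))"
        by (simp add: algebra_simps)
      finally show ?thesis .
    qed
    have ylc: "yl (b # a') = yb # yl a'" by (simp add: yl_def yb_def)
    show ?thesis
      using Fz Fk Fk1 Fk2 km unfolding ylc
      by (simp add: F_def k_def P_def S_def T_def algebra_simps)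
  qed
qed



lemma qpow_sum_yl: "q ^ sum_list a * prod_list (yl a) = 1"
  by (induction a) (simp_all add: yl_def power_add field_simps)

lemma dummy_placeholder: "True" by simp

lemma qint_m1: "qint (-1) = (1 / q - 1) / (q - 1)"
  by (simp add: qint_def power_int_minus divide_inverse)

lemma chain_term:
  assumes "sorted_wrt (<) a" "a \<noteq> []"
  shows "poly (smult (q ^ sum_list a) (pcompose (qE a)
           [: - qint (int (length a) + 1) / q ^ (length a + 1), 1 / q ^ (length a + 1) :])) (qint (-1))
         = (-1) ^ (length a - 1) * h2 (yl a)"
proof -
  define k where "k = length a"
  have qk: "qint (int k + 1) = (q ^ (k + 1) - 1) / (q - 1)"
    using qint_nat[of "k + 1"] by (simp add: add.commute)
  have key: "1 + (q - 1) * (- qint (int k + 1) / q ^ (k + 1) + qint (-1) * (1 / q ^ (k + 1)))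
             = 1 / q ^ (k + 2)"
  proof -
    have gen: "1 + (x - 1) * (- ((Q - 1) / (x - 1)) / Q + (1 / x - 1) / (x - 1) * (1 / Q)) = 1 / (x * Q)"
      if "x \<noteq> 0" "x \<noteq> 1" "Q \<noteq> 0" for x Q :: qfun
    proof -
      have d: "d * (- (A / d) / Q + B / d * (1 / Q)) = (B - A) / Q" if "d \<noteq> 0" for d A B :: qfun
        using that by (simp add: field_simps, simp add: diff_divide_distrib)
      have "x - 1 \<noteq> 0" using that by simp
      from d[OF this, of "Q - 1" "1 / x - 1"]
      have "1 + (x - 1) * (- ((Q - 1) / (x - 1)) / Q + (1 / x - 1) / (x - 1) * (1 / Q))
          = 1 + (1 / x - 1 - (Q - 1)) / Q" by simp
      also have "\<dots> = 1 / (x * Q)" using that by (simp add: field_simps)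
      finally show ?thesis .
    qed
    show ?thesis unfolding qk qint_m1 using gen[of q "q ^ (k + 1)"]
      by (simp add: minus_divide_left)
  qed
  have "poly (smult (q ^ sum_list a) (pcompose (qE a)
           [: - qint (int k + 1) / q ^ (k + 1), 1 / q ^ (k + 1) :])) (qint (-1))
        = q ^ sum_list a * poly (R a) (1 / q ^ (k + 2))"
    using key by (simp add: qE_R[OF assms] poly_pcompose mult.commute)
  also have "\<dots> = (-1) ^ (k - 1) * (q ^ sum_list a * prod_list (yl a)) * h2 (yl a)"
    using R_vals[OF assms] by (simp add: k_def)
  also have "\<dots> = (-1) ^ (k - 1) * h2 (yl a)" by (simp add: qpow_sum_yl)
  finally show ?thesis by (simp add: k_def)
qed

lemma height_mono:
  assumes fin: "finite P" and hf: "height_function P h"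
  shows "x \<in> P \<Longrightarrow> y \<in> P \<Longrightarrow> x < y \<Longrightarrow> h x < h y"
proof (induction "card {z\<in>P. x < z \<and> z < y}" arbitrary: x y rule: less_induct)
  case less
  show ?case
  proof (cases "\<exists>z\<in>P. x < z \<and> z < y")
    case False
    hence "covers_in P x y" using less.prems by (simp add: covers_in_def)
    thus ?thesis using hf by (simp add: height_function_def)
  next
    case True
    then obtain z where z: "z \<in> P" "x < z" "z < y" by blast
    have f: "finite {z\<in>P. x < z \<and> z < y}" using fin by simp
    have "{w\<in>P. x < w \<and> w < z} \<subset> {w\<in>P. x < w \<and> w < y}"
      using z by (auto intro: less_trans)
    hence c1: "card {w\<in>P. x < w \<and> w < z} < card {w\<in>P. x < w \<and> w < y}"
      using f by (rule psubset_card_mono[rotated])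
    have "{w\<in>P. z < w \<and> w < y} \<subset> {w\<in>P. x < w \<and> w < y}"
      using z by (auto intro: less_trans)
    hence c2: "card {w\<in>P. z < w \<and> w < y} < card {w\<in>P. x < w \<and> w < y}"
      using f by (rule psubset_card_mono[rotated])
    have "h x < h z" using less.hyps[OF c1] less.prems z by blast
    moreover have "h z < h y" using less.hyps[OF c2] less.prems z by blast
    ultimately show ?thesis by simp
  qed
qed

lemma qZeta_eval:
  assumes fin: "finite P" and hf: "height_function P h"
  shows "poly (qZeta P h) (qint (-1)) =
    (\<Sum>cs\<in>chains_in P. (-1) ^ (length cs - 1) * h2 (map (\<lambda>x. 1 / q ^ h x) cs))"
  unfolding qZeta_def poly_sum
proof (rule sum.cong)
  fix cs assume cs: "cs \<in> chains_in P"
  have s: "sorted_wrt (<) (map h cs)"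
    using cs height_mono[OF fin hf] unfolding chains_in_def sorted_wrt_map
    by (auto intro: sorted_wrt_mono_rel[rotated])
  have ne: "map h cs \<noteq> []" using cs by (simp add: chains_in_def)
  show "poly (let k = length cs in smult (q ^ sum_list (map h cs))
          (pcompose (qE (map h cs)) [:- qint (int k + 1) / q ^ (k + 1), 1 / q ^ (k + 1):])) (qint (-1))
       = (-1) ^ (length cs - 1) * h2 (map (\<lambda>x. 1 / q ^ h x) cs)"
    using chain_term[OF s ne] by (simp add: Let_def yl_def comp_def)
qed simp



lemma sorted_lt_distinct: "sorted_wrt (<) (xs :: 'a::order list) \<Longrightarrow> distinct xs"
  by (induction xs) auto

lemma sorted_lt_last: "sorted_wrt (<) (xs :: 'a::order list) \<Longrightarrow> x \<in> set xs \<Longrightarrow> x = last xs \<or> x < last xs"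
proof (induction xs)
  case Nil thus ?case by simp
next
  case (Cons a xs)
  show ?case
  proof (cases "xs = []")
    case True thus ?thesis using Cons by simp
  next
    case False
    have "last xs \<in> set xs" using False by simp
    hence "a < last xs" using Cons.prems by simp
    thus ?thesis using Cons False by auto
  qed
qed

lemma finite_chains: "finite P \<Longrightarrow> finite (chains_in (P :: 'a::order set))"
proof -
  assume f: "finite P"
  have "chains_in P \<subseteq> {xs. set xs \<subseteq> P \<and> length xs \<le> card P}"
  proof
    fix c assume c: "c \<in> chains_in P"
    hence "distinct c" "set c \<subseteq> P" using sorted_lt_distinct by (auto simp: chains_in_def)
    hence "length c \<le> card P" using f by (metis card_mono distinct_card)
    thus "c \<in> {xs. set xs \<subseteq> P \<and> length xs \<le> card P}" using c by (simp add: chains_in_def)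
  qed
  thus ?thesis using finite_lists_length_le[OF f] finite_subset by blast
qed

definition Ech :: "'a::order set \<Rightarrow> 'a \<Rightarrow> 'a list set" where
  "Ech P y = {c \<in> chains_in P. last c = y}"

lemma last_in_P: "c \<in> chains_in P \<Longrightarrow> last c \<in> P"
  by (auto simp: chains_in_def)

lemma sum_chains_group:
  "finite P \<Longrightarrow> (\<Sum>c\<in>chains_in P. f c) = (\<Sum>y\<in>P. \<Sum>c\<in>Ech P y. f c)"
  unfolding Ech_def
  by (rule sum.group[symmetric]) (auto simp: finite_chains last_in_P)

lemma Ech_decomp:
  assumes "y \<in> P"
  shows "Ech P y = insert [y] ((\<lambda>c. c @ [y]) ` {c \<in> chains_in P. last c < y})"
proof (rule set_eqI, rule iffI)
  fix c assume c: "c \<in> Ech P y"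
  hence ne: "c \<noteq> []" and sc: "sorted_wrt (<) c" and sP: "set c \<subseteq> P" and ly: "last c = y"
    by (auto simp: Ech_def chains_in_def)
  show "c \<in> insert [y] ((\<lambda>c. c @ [y]) ` {c \<in> chains_in P. last c < y})"
  proof (cases "butlast c = []")
    case True
    hence "c = [y]" using ne ly by (metis append_butlast_last_id append_Nil)
    thus ?thesis by simp
  next
    case False
    have cc: "c = butlast c @ [y]" using ne ly by (metis append_butlast_last_id)
    have "sorted_wrt (<) (butlast c @ [y])" using sc cc by simp
    hence s1: "sorted_wrt (<) (butlast c)" and s2: "\<forall>x\<in>set (butlast c). x < y"
      by (auto simp: sorted_wrt_append)
    have "last (butlast c) < y" using s2 False by simp
    moreover have "butlast c \<in> chains_in P"
      using s1 False sP by (auto simp: chains_in_def dest: in_set_butlastD)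
    ultimately show ?thesis using cc by blast
  qed
next
  fix c assume "c \<in> insert [y] ((\<lambda>c. c @ [y]) ` {c \<in> chains_in P. last c < y})"
  thus "c \<in> Ech P y"
  proof
    assume "c = [y]" thus ?thesis using assms by (simp add: Ech_def chains_in_def)
  next
    assume "c \<in> (\<lambda>c. c @ [y]) ` {c \<in> chains_in P. last c < y}"
    then obtain c' where c': "c = c' @ [y]" "c' \<in> chains_in P" "last c' < y" by blast
    have "\<forall>x\<in>set c'. x < y"
    proof
      fix x assume "x \<in> set c'"
      hence "x = last c' \<or> x < last c'" using sorted_lt_last c' by (auto simp: chains_in_def)
      thus "x < y" using c' by (auto intro: less_trans)
    qed
    thus ?thesis using c' assms by (auto simp: Ech_def chains_in_def sorted_wrt_append)
  qed
qed

lemma sum_Ech: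
  assumes fin: "finite P" and y: "y \<in> P"
  shows "(\<Sum>c\<in>Ech P y. f c) = f [y] + (\<Sum>z\<in>{z\<in>P. z < y}. \<Sum>c\<in>Ech P z. f (c @ [y]))"
proof -
  have nin: "[y] \<notin> (\<lambda>c. c @ [y]) ` {c \<in> chains_in P. last c < y}"
    by (auto simp: chains_in_def)
  have fin2: "finite {c \<in> chains_in P. last c < y}" using finite_chains[OF fin] by simp
  have "(\<Sum>c\<in>Ech P y. f c) = f [y] + (\<Sum>c\<in>(\<lambda>c. c @ [y]) ` {c \<in> chains_in P. last c < y}. f c)"
    unfolding Ech_decomp[OF y] using nin fin2 by simp
  also have "(\<Sum>c\<in>(\<lambda>c. c @ [y]) ` {c \<in> chains_in P. last c < y}. f c)
      = (\<Sum>c\<in>{c \<in> chains_in P. last c < y}. f (c @ [y]))"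
    by (subst sum.reindex) (auto simp: inj_on_def)
  also have "\<dots> = (\<Sum>z\<in>{z\<in>P. z < y}. \<Sum>c\<in>Ech P z. f (c @ [y]))"
  proof -
    have "(\<Sum>c\<in>{c \<in> chains_in P. last c < y}. f (c @ [y]))
      = (\<Sum>z\<in>{z\<in>P. z < y}. \<Sum>c\<in>{c \<in> {c \<in> chains_in P. last c < y}. last c = z}. f (c @ [y]))"
      by (rule sum.group[symmetric]) (use fin fin2 in \<open>auto simp: last_in_P\<close>)
    also have "\<dots> = (\<Sum>z\<in>{z\<in>P. z < y}. \<Sum>c\<in>Ech P z. f (c @ [y]))"
      by (rule sum.cong) (auto simp: Ech_def intro!: sum.cong)
    finally show ?thesis .
  qed
  finally show ?thesis .
qed



lemma h2_snoc: "h2 (xs @ [v]) = h2 xs + v * (sum_list xs + v)"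
  by (induction xs) (simp_all add: algebra_simps)

definition sg :: "'a list \<Rightarrow> qfun" where "sg c = (-1) ^ (length c - 1)"

lemma sg_snoc: "c \<noteq> [] \<Longrightarrow> sg (c @ [y]) = - sg c"
  by (cases c) (simp_all add: sg_def)

lemma Ech_ne: "c \<in> Ech P y \<Longrightarrow> c \<noteq> []"
  by (simp add: Ech_def chains_in_def)

context
  fixes P :: "'a::order set" and bot top :: 'a and w :: "'a \<Rightarrow> qfun"
  assumes fin: "finite P" and bP: "bot \<in> P" and tP: "top \<in> P"
    and bt: "\<forall>x\<in>P. bot \<le> x \<and> x \<le> top"
begin

definition "AA y = (\<Sum>c\<in>Ech P y. sg c)"
definition "LL y = (\<Sum>c\<in>Ech P y. sg c * sum_list (map w c))"
definition "TT y = (\<Sum>c\<in>Ech P y. sg c * h2 (map w c))"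

lemma AA_rec: "y \<in> P \<Longrightarrow> AA y = 1 - (\<Sum>z\<in>{z\<in>P. z < y}. AA z)"
proof -
  assume y: "y \<in> P"
  have "AA y = 1 + (\<Sum>z\<in>{z\<in>P. z < y}. \<Sum>c\<in>Ech P z. sg (c @ [y]))"
    unfolding AA_def by (subst sum_Ech[OF fin y]) (simp add: sg_def)
  also have "\<dots> = 1 - (\<Sum>z\<in>{z\<in>P. z < y}. AA z)"
    by (simp add: AA_def sg_snoc Ech_ne sum_negf cong: sum.cong)
  finally show ?thesis .
qed

lemma LL_rec: "y \<in> P \<Longrightarrow> LL y = w y * AA y - (\<Sum>z\<in>{z\<in>P. z < y}. LL z)"
proof -
  assume y: "y \<in> P"
  have "LL y = w y + (\<Sum>z\<in>{z\<in>P. z < y}. \<Sum>c\<in>Ech P z. sg (c @ [y]) * sum_list (map w (c @ [y])))"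
    unfolding LL_def by (subst sum_Ech[OF fin y]) (simp add: sg_def)
  also have "\<dots> = w y + (\<Sum>z\<in>{z\<in>P. z < y}. \<Sum>c\<in>Ech P z. - (sg c * sum_list (map w c)) - w y * sg c)"
    by (intro arg_cong2[where f="(+)"] refl sum.cong) (auto simp: sg_snoc Ech_ne algebra_simps)
  also have "\<dots> = w y * AA y - (\<Sum>z\<in>{z\<in>P. z < y}. LL z)"
  proof -
    have e: "(\<Sum>z\<in>{z\<in>P. z < y}. \<Sum>c\<in>Ech P z. - (sg c * sum_list (map w c)) - w y * sg c)
      = - (\<Sum>z\<in>{z\<in>P. z < y}. LL z) - w y * (\<Sum>z\<in>{z\<in>P. z < y}. AA z)"
      by (simp add: LL_def AA_def sum_subtractf sum_negf sum_distrib_left)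
    show ?thesis unfolding e AA_rec[OF y] by (simp add: algebra_simps)
  qed
  finally show ?thesis .
qed

lemma TT_rec: "y \<in> P \<Longrightarrow> TT y = w y * LL y - (\<Sum>z\<in>{z\<in>P. z < y}. TT z)"
proof -
  assume y: "y \<in> P"
  have "TT y = w y * w y + (\<Sum>z\<in>{z\<in>P. z < y}. \<Sum>c\<in>Ech P z. sg (c @ [y]) * h2 (map w (c @ [y])))"
    unfolding TT_def by (subst sum_Ech[OF fin y]) (simp add: sg_def)
  also have "\<dots> = w y * w y + (\<Sum>z\<in>{z\<in>P. z < y}. \<Sum>c\<in>Ech P z.
       - (sg c * h2 (map w c)) - w y * (sg c * sum_list (map w c)) - w y * w y * sg c)"
    by (intro arg_cong2[where f="(+)"] refl sum.cong) (auto simp: sg_snoc Ech_ne h2_snoc algebra_simps)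
  also have "\<dots> = w y * LL y - (\<Sum>z\<in>{z\<in>P. z < y}. TT z)"
  proof -
    have e: "(\<Sum>z\<in>{z\<in>P. z < y}. \<Sum>c\<in>Ech P z.
       - (sg c * h2 (map w c)) - w y * (sg c * sum_list (map w c)) - w y * w y * sg c)
      = - (\<Sum>z\<in>{z\<in>P. z < y}. TT z) - w y * (\<Sum>z\<in>{z\<in>P. z < y}. LL z)
        - w y * w y * (\<Sum>z\<in>{z\<in>P. z < y}. AA z)"
      by (simp add: TT_def LL_def AA_def sum_subtractf sum_negf sum_distrib_left)
    show ?thesis unfolding e LL_rec[OF y] AA_rec[OF y] by (simp add: algebra_simps)
  qed
  finally show ?thesis .
qed

lemma card_less_lt:
  assumes "z \<in> P" "z < y"
  shows "card {u\<in>P. u < z} < card {u\<in>P. u < y}"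
proof (rule psubset_card_mono)
  show "finite {u\<in>P. u < y}" using fin by simp
  show "{u\<in>P. u < z} \<subset> {u\<in>P. u < y}" using assms by (auto intro: less_trans)
qed

lemma AA_val: "y \<in> P \<Longrightarrow> AA y = (if y = bot then 1 else 0)"
proof (induction "card {z\<in>P. z < y}" arbitrary: y rule: less_induct)
  case less
  show ?case
  proof (cases "y = bot")
    case True
    have e: "{z\<in>P. z < y} = {}" using True bt by (auto simp: not_less[symmetric])
    show ?thesis using AA_rec[OF less.prems] True unfolding e by simp
  next
    case False
    have bly: "bot < y" using False bt less.prems by (auto simp: order.order_iff_strict)
    have "(\<Sum>z\<in>{z\<in>P. z < y}. AA z) = (\<Sum>z\<in>{z\<in>P. z < y}. if z = bot then 1 else 0)"
      using less.hyps card_less_lt by (intro sum.cong) auto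
    also have "\<dots> = 1" using fin bP bly by (simp add: sum.delta')
    finally show ?thesis using AA_rec[OF less.prems] False by simp
  qed
qed


lemma mob_refl: "mob_aux n Q x x = 1"
  by (cases n) simp_all

lemma LL_val: "y \<in> P \<Longrightarrow> card {z\<in>P. z < y} < n \<Longrightarrow> LL y = w bot * of_int (mob_aux n P bot y)"
proof (induction "card {z\<in>P. z < y}" arbitrary: y n rule: less_induct)
  case less
  show ?case
  proof (cases "y = bot")
    case True
    have e: "{z\<in>P. z < y} = {}" using True bt by (auto simp: not_less[symmetric])
    show ?thesis using LL_rec[OF less.prems(1)] AA_val[OF less.prems(1)] True unfolding e
      by (simp add: mob_refl)
  next
    case False
    have bly: "bot < y" using False bt less.prems by (auto simp: order.order_iff_strict)
    obtain m where n: "n = Suc m" using less.prems(2) by (cases n) auto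
    have "(\<Sum>z\<in>{z\<in>P. z < y}. LL z) = (\<Sum>z\<in>{z\<in>P. z < y}. w bot * of_int (mob_aux m P bot z))"
    proof (intro sum.cong refl)
      fix z assume z: "z \<in> {z\<in>P. z < y}"
      have c: "card {u\<in>P. u < z} < card {u\<in>P. u < y}" using z card_less_lt by auto
      have zP: "z \<in> P" using z by simp
      have cm: "card {u\<in>P. u < z} < m" using c less.prems(2) n by simp
      show "LL z = w bot * of_int (mob_aux m P bot z)"
        by (rule less.hyps[OF c zP cm])
    qed
    moreover have "{z\<in>P. bot \<le> z \<and> z < y} = {z\<in>P. z < y}" using bt by auto
    ultimately show ?thesis
      using LL_rec[OF less.prems(1)] AA_val[OF less.prems(1)] False bly n
      by (simp add: sum_distrib_left of_int_sum)
  qed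
qed

lemma total_chain_sum:
  "(\<Sum>c\<in>chains_in P. sg c * h2 (map w c)) = w bot * w top * of_int (moebius P bot top)"
proof -
  have Pe: "P = insert top {z\<in>P. z < top}" using bt tP by (auto simp: order.order_iff_strict)
  have "(\<Sum>c\<in>chains_in P. sg c * h2 (map w c)) = (\<Sum>y\<in>P. TT y)"
    unfolding TT_def by (rule sum_chains_group[OF fin])
  also have "\<dots> = TT top + (\<Sum>y\<in>{z\<in>P. z < top}. TT y)"
    by (subst Pe) (simp add: fin)
  also have "\<dots> = w top * LL top" using TT_rec[OF tP] by simp
  also have "card {z\<in>P. z < top} < card P"
    by (rule psubset_card_mono) (use fin tP in auto)
  hence "LL top = w bot * of_int (moebius P bot top)"
    unfolding moebius_def by (rule LL_val[OF tP])
  finally show ?thesis by simp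
qed

end



theorem mainTheorem14:
  fixes P :: "'a::order set" and h :: "'a \<Rightarrow> nat" and bot top :: 'a
  assumes "finite P"
    and "bot \<in> P" and "top \<in> P"
    and "\<forall>x\<in>P. bot \<le> x \<and> x \<le> top"
    and "height_function P h"
  shows "poly (qZeta P h) (qint (-1)) =
           qvar powi (- (int (h bot) + int (h top))) * of_int (moebius P bot top)"
proof -
  have "poly (qZeta P h) (qint (-1)) =
    (\<Sum>cs\<in>chains_in P. sg cs * h2 (map (\<lambda>x. 1 / q ^ h x) cs))"
    using qZeta_eval[OF assms(1,5)] by (simp add: sg_def)
  also have "\<dots> = 1 / q ^ h bot * (1 / q ^ h top) * of_int (moebius P bot top)"
    by (rule total_chain_sum[OF assms(1-4)])
  also have "1 / q ^ h bot * (1 / q ^ h top) = qvar powi (- (int (h bot) + int (h top)))"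
  proof -
    have "- (int (h bot) + int (h top)) = - int (h bot + h top)" by simp
    hence "qvar powi (- (int (h bot) + int (h top))) = qvar powi (- int (h bot + h top))"
      by (simp only:)
    also have "\<dots> = inverse (q ^ (h bot + h top))"
      by (simp only: power_int_minus power_int_of_nat)
    finally have "qvar powi (- (int (h bot) + int (h top))) = inverse (q ^ (h bot + h top))" .
    thus ?thesis by (simp add: power_add field_simps)
  qed
  finally show ?thesis .
qed


end
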